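(* Let $\|\cdot\|$ be an arbitrary norm on $\mathbb{R}^d$, let $g:\mathbb{R}^d\to\mathbb{C}$ be a measurable function and let $A$ be a real invertible $d\times d$ matrix such that $$\sum_{j\in\mathbb{Z}} g(A^j\gamma)=1\quad\text{for all }\gamma\in\mathbb{R}^d\setminus\{0\},$$ and such that there is a constant $C>0$ with $\sum_{j\in\mathbb{Z}}|g(A^j\gamma)|\le C$ for all $\gamma\in\mathbb{R}^d\setminus\{0\}$. For $f\in L^1(\mathbb{R}^d)$ define $$h(\gamma)=(K_g f)(\gamma):=\int_{\mathbb{R}^d} f(t)\, g\Big(\frac{\gamma}{\|t\|}\Big)\,dt,\qquad \gamma\in\mathbb{R}^d.$$ Then $K_g f$ is well-defined for every $f\in L^1(\mathbb{R}^d)$, and $$\sum_{j\in\mathbb{Z}} h(A^j\gamma)=\int_{\mathbb{R}^d} f(t)\,dt\quad\text{for all }\gamma\in\mathbb{R}^d\setminus\{0\}.$$ In particular, if $\int_{\mathbb{R}^d}f(t)\,dt=1$ then $\sum_{j\in\mathbb{Z}} h(A^j\gamma)=1$ for all $\gamma\ne0$. Moreover, if $g$ is nonnegative, then $K_g$ maps nonnegative functions $f\in L^1(\mathbb{R}^d)$ to nonnegative functions. *)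

theory Defs
  imports "HOL-Analysis.Analysis"
begin

definition is_norm :: "('a::real_vector \<Rightarrow> real) \<Rightarrow> bool" where
  "is_norm N \<longleftrightarrow> (\<forall>x. N x \<ge> 0) \<and> (\<forall>x. N x = 0 \<longleftrightarrow> x = 0) \<and>
     (\<forall>c x. N (c *\<^sub>R x) = \<bar>c\<bar> * N x) \<and> (\<forall>x y. N (x + y) \<le> N x + N y)"

definition mat_zpow_app :: "real^'n^'n \<Rightarrow> int \<Rightarrow> real^'n \<Rightarrow> real^'n" where
  "mat_zpow_app A j x =
     (if j \<ge> 0 then ((\<lambda>v. A *v v) ^^ nat j) x
      else ((\<lambda>v. matrix_inv A *v v) ^^ nat (- j)) x)"

definition K_op :: "(real^'n \<Rightarrow> real) \<Rightarrow> (real^'n \<Rightarrow> complex) \<Rightarrow> (real^'n \<Rightarrow> complex)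
    \<Rightarrow> real^'n \<Rightarrow> complex" where
  "K_op N g f \<gamma> = (LINT t|lborel. f t * g ((1 / N t) *\<^sub>R \<gamma>))"

definition nonneg_c :: "complex \<Rightarrow> bool" where
  "nonneg_c z \<longleftrightarrow> Im z = 0 \<and> Re z \<ge> 0"

end

theory Submission
  imports Defs "HOL-Analysis.Analysis"
begin


lemma funpow_mat_scale:
  fixes B :: "real^'n^'n"
  shows "((\<lambda>v. B *v v) ^^ n) (c *\<^sub>R x) = c *\<^sub>R ((\<lambda>v. B *v v) ^^ n) x"
  by (induction n) (auto simp: matrix_vector_mult_scaleR)

lemma mzp_scale:
  fixes A :: "real^'n^'n"
  shows "mat_zpow_app A j (c *\<^sub>R x) = c *\<^sub>R mat_zpow_app A j x"
  unfolding mat_zpow_app_def by (simp add: funpow_mat_scale)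

lemma mzp_0: "mat_zpow_app A 0 x = x"
  by (simp add: mat_zpow_app_def)

lemma is_norm_0: "is_norm N \<Longrightarrow> N 0 = 0"
  by (simp add: is_norm_def)

lemma is_norm_sum: assumes nN: "is_norm N" and fS: "finite S" shows "N (sum h S) \<le> (\<Sum>i\<in>S. N (h i))"
  using fS
proof (induction S rule: finite_induct)
  case empty then show ?case using is_norm_0[OF nN] by simp
next
  case (insert x F)
  then have "N (h x + sum h F) \<le> N (h x) + N (sum h F)" using nN by (simp add: is_norm_def)
  with insert show ?case by simp
qed

lemma is_norm_bound:
  fixes N :: "real^'n \<Rightarrow> real"
  assumes nN: "is_norm N"
  shows "N x \<le> (\<Sum>i\<in>UNIV. N (axis i 1)) * norm x"
proof -
  have xe: "x = (\<Sum>i\<in>UNIV. (x$i) *\<^sub>R axis i (1::real))"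
    using basis_expansion[of x] by (simp add: scalar_mult_eq_scaleR)
  have "N x = N (\<Sum>i\<in>UNIV. (x$i) *\<^sub>R axis i (1::real))"
    by (subst xe) (rule refl)
  also have "\<dots> \<le> (\<Sum>i\<in>UNIV. N ((x$i) *\<^sub>R axis i (1::real)))"
    by (rule is_norm_sum[OF nN]) simp
  also have "\<dots> = (\<Sum>i\<in>UNIV. \<bar>x$i\<bar> * N (axis i 1))"
    using nN unfolding is_norm_def by simp
  also have "\<dots> \<le> (\<Sum>i\<in>UNIV. norm x * N (axis i 1))"
  proof (rule sum_mono)
    fix i
    have "N (axis i (1::real)) \<ge> 0" using nN unfolding is_norm_def by blast
    then show "\<bar>x$i\<bar> * N (axis i 1) \<le> norm x * N (axis i 1)"
      using component_le_norm_cart[of x i] by (rule mult_right_mono[rotated])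
  qed
  finally show ?thesis by (simp add: sum_distrib_left mult.commute)
qed

lemma is_norm_lip:
  fixes N :: "real^'n \<Rightarrow> real"
  assumes "is_norm N"
  shows "\<bar>N x - N y\<bar> \<le> N (x - y)"
proof -
  have 1: "N x \<le> N y + N (x - y)" using assms unfolding is_norm_def
    by (metis add.commute diff_add_cancel)
  have 2: "N y \<le> N x + N (y - x)" using assms unfolding is_norm_def
    by (metis add.commute diff_add_cancel)
  have "N (y - x) = N ((-1) *\<^sub>R (x - y))" by simp
  also have "\<dots> = \<bar>-1\<bar> * N (x - y)" using assms unfolding is_norm_def by blast
  also have "\<dots> = N (x - y)" by simp
  finally show ?thesis using 1 2 by linarith
qed

lemma is_norm_cont:
  fixes N :: "real^'n \<Rightarrow> real"
  assumes "is_norm N"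
  shows "continuous_on UNIV N"
proof -
  define M where "M = (\<Sum>i\<in>UNIV. N (axis i (1::real)))"
  have M0: "M \<ge> 0" unfolding M_def using assms by (auto simp: is_norm_def intro: sum_nonneg)
  have "M-lipschitz_on UNIV N"
  proof (rule lipschitz_onI)
    fix x y :: "real^'n"
    have "dist (N x) (N y) \<le> N (x - y)" using is_norm_lip[OF assms] by (simp add: dist_real_def)
    also have "\<dots> \<le> M * norm (x - y)" using is_norm_bound[OF assms] M_def by simp
    finally show "dist (N x) (N y) \<le> M * dist x y" by (simp add: dist_norm)
  qed (use M0 in auto)
  then show ?thesis using lipschitz_on_continuous_on by blast
qed

lemma is_norm_meas:
  fixes N :: "real^'n \<Rightarrow> real"
  assumes "is_norm N"
  shows "N \<in> borel_measurable borel"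
  using is_norm_cont[OF assms] by (simp add: borel_measurable_continuous_onI)

lemma has_sum_count_space:
  fixes h :: "'a \<Rightarrow> complex"
  assumes "integrable (count_space UNIV) h"
  shows "(h has_sum integral\<^sup>L (count_space UNIV) h) UNIV"
proof -
  have i: "Infinite_Set_Sum.abs_summable_on h UNIV" using assms by (simp add: Infinite_Set_Sum.abs_summable_on_def)
  then have a: "Infinite_Sum.abs_summable_on h UNIV" using abs_summable_equivalent by blast
  then have "h summable_on UNIV" using abs_summable_summable by blast
  moreover have "infsetsum h UNIV = infsum h UNIV"
    using infsetsum_infsum i by blast
  ultimately show ?thesis by (simp add: infsetsum_def)
qed


lemma g_count:
  fixes g :: "real^'n \<Rightarrow> complex" and A :: "real^'n^'n"
  assumes g_sum: "\<And>\<gamma>. \<gamma> \<noteq> 0 \<Longrightarrow> ((\<lambda>j. g (mat_zpow_app A j \<gamma>)) has_sum 1) UNIV"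
    and g_abs: "\<And>\<gamma>. \<gamma> \<noteq> 0 \<Longrightarrow> (\<lambda>j. norm (g (mat_zpow_app A j \<gamma>))) summable_on UNIV
                     \<and> (\<Sum>\<^sub>\<infinity>j. norm (g (mat_zpow_app A j \<gamma>))) \<le> C"
    and x: "x \<noteq> 0"
  shows "integrable (count_space UNIV) (\<lambda>j. g (mat_zpow_app A j x))"
    and "integral\<^sup>L (count_space UNIV) (\<lambda>j. g (mat_zpow_app A j x)) = 1"
    and "integral\<^sup>L (count_space UNIV) (\<lambda>j. norm (g (mat_zpow_app A j x))) \<le> C"
proof -
  have s: "(\<lambda>j. norm (g (mat_zpow_app A j x))) summable_on UNIV" using g_abs[OF x] by blast
  then have i: "Infinite_Set_Sum.abs_summable_on (\<lambda>j. g (mat_zpow_app A j x)) UNIV"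
    using abs_summable_equivalent by blast
  then show i': "integrable (count_space UNIV) (\<lambda>j. g (mat_zpow_app A j x))"
    by (simp add: Infinite_Set_Sum.abs_summable_on_def)
  have "infsetsum (\<lambda>j. g (mat_zpow_app A j x)) UNIV = infsum (\<lambda>j. g (mat_zpow_app A j x)) UNIV"
    using infsetsum_infsum i by blast
  also have "\<dots> = 1" using g_sum[OF x] by (rule infsumI)
  finally show "integral\<^sup>L (count_space UNIV) (\<lambda>j. g (mat_zpow_app A j x)) = 1"
    by (simp add: infsetsum_def)
  have i2: "Infinite_Set_Sum.abs_summable_on (\<lambda>j. norm (g (mat_zpow_app A j x))) UNIV"
    using i' by (simp add: Infinite_Set_Sum.abs_summable_on_def)
  have "infsetsum (\<lambda>j. norm (g (mat_zpow_app A j x))) UNIV = infsum (\<lambda>j. norm (g (mat_zpow_app A j x))) UNIV"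
    using infsetsum_infsum i2 by blast
  also have "\<dots> \<le> C" using g_abs[OF x] by blast
  finally show "integral\<^sup>L (count_space UNIV) (\<lambda>j. norm (g (mat_zpow_app A j x))) \<le> C"
    by (simp add: infsetsum_def)
qed

theorem proposition3p1:
  fixes N :: "real^'n \<Rightarrow> real"
    and g :: "real^'n \<Rightarrow> complex"
    and A :: "real^'n^'n"
    and C :: real
    and f :: "real^'n \<Rightarrow> complex"
  assumes norm: "is_norm N"
    and g_meas: "g \<in> borel_measurable borel"
    and A_inv: "invertible A"
    and g_sum: "\<And>\<gamma>. \<gamma> \<noteq> 0 \<Longrightarrow> ((\<lambda>j. g (mat_zpow_app A j \<gamma>)) has_sum 1) UNIV"
    and C_pos: "C > 0"
    and g_abs: "\<And>\<gamma>. \<gamma> \<noteq> 0 \<Longrightarrow> (\<lambda>j. norm (g (mat_zpow_app A j \<gamma>))) summable_on UNIV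
                     \<and> (\<Sum>\<^sub>\<infinity>j. norm (g (mat_zpow_app A j \<gamma>))) \<le> C"
    and f_L1: "integrable lborel f"
  shows "(\<forall>\<gamma>. integrable lborel (\<lambda>t. f t * g ((1 / N t) *\<^sub>R \<gamma>)))
    \<and> (\<forall>\<gamma>. \<gamma> \<noteq> 0 \<longrightarrow>
          ((\<lambda>j. K_op N g f (mat_zpow_app A j \<gamma>)) has_sum (LINT t|lborel. f t)) UNIV)
    \<and> ((LINT t|lborel. f t) = 1 \<longrightarrow> (\<forall>\<gamma>. \<gamma> \<noteq> 0 \<longrightarrow>
          ((\<lambda>j. K_op N g f (mat_zpow_app A j \<gamma>)) has_sum 1) UNIV))
    \<and> ((\<forall>x. nonneg_c (g x)) \<longrightarrow> (AE t in lborel. nonneg_c (f t)) \<longrightarrow>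
          (\<forall>\<gamma>. nonneg_c (K_op N g f \<gamma>)))"
proof -
  have Nmeas[measurable]: "N \<in> borel_measurable borel" by (rule is_norm_meas[OF norm])
  have gm[measurable]: "g \<in> borel_measurable borel" by (rule g_meas)
  have fm[measurable]: "f \<in> borel_measurable lborel" using f_L1 by auto
  have Npos: "\<And>t. t \<noteq> 0 \<Longrightarrow> N t > 0" using norm unfolding is_norm_def
    by (metis less_eq_real_def)
  have gC: "norm (g x) \<le> C" if "x \<noteq> 0" for x
  proof -
    have "norm (g x) = norm (g (mat_zpow_app A 0 x))" by (simp add: mzp_0)
    also have "\<dots> \<le> integral\<^sup>L (count_space UNIV) (\<lambda>j. norm (g (mat_zpow_app A j x)))"
    proof -
      have ii: "integrable (count_space UNIV) (\<lambda>j. norm (g (mat_zpow_app A j x)))"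
        using g_count(1)[OF g_sum g_abs that] by simp
      have "integral\<^sup>L (count_space UNIV) (\<lambda>j. indicator {0::int} j * norm (g (mat_zpow_app A j x)))
          \<le> integral\<^sup>L (count_space UNIV) (\<lambda>j. norm (g (mat_zpow_app A j x)))"
      proof (rule integral_mono[OF _ ii])
        show "integrable (count_space UNIV) (\<lambda>j. indicator {0::int} j * norm (g (mat_zpow_app A j x)))"
          by (rule Bochner_Integration.integrable_bound[OF ii]) (auto simp: indicator_def)
      qed (auto simp: indicator_def)
      moreover have "integral\<^sup>L (count_space UNIV) (\<lambda>j. indicator {0::int} j * norm (g (mat_zpow_app A j x)))
          = norm (g (mat_zpow_app A 0 x))"
      proof -
        have "(\<lambda>j. indicator {0::int} j * norm (g (mat_zpow_app A j x)))
            = (\<lambda>j. norm (g (mat_zpow_app A 0 x)) * indicator {0::int} j)"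
          by (auto simp: indicator_def fun_eq_iff)
        moreover have "integral\<^sup>L (count_space UNIV) (indicator {0::int} :: int \<Rightarrow> real) = 1"
          by (simp add: measure_count_space)
        ultimately show ?thesis by simp
      qed
      ultimately show ?thesis by simp
    qed
    also have "\<dots> \<le> C" using g_count(3)[OF g_sum g_abs that] .
    finally show ?thesis .
  qed
  define B where "B = max C (norm (g 0))"
  have gB: "norm (g x) \<le> B" for x
    using gC[of x] unfolding B_def by (cases "x = 0") auto
  have part1: "integrable lborel (\<lambda>t. f t * g ((1 / N t) *\<^sub>R \<gamma>))" for \<gamma>
  proof (rule Bochner_Integration.integrable_bound[where f="\<lambda>t. of_real B * f t"])
    show "integrable lborel (\<lambda>t. complex_of_real B * f t)" using f_L1 by simp
    show "(\<lambda>t. f t * g ((1 / N t) *\<^sub>R \<gamma>)) \<in> borel_measurable lborel" by measurable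
    show "AE t in lborel. norm (f t * g ((1 / N t) *\<^sub>R \<gamma>)) \<le> norm (of_real B * f t)"
    proof (rule AE_I2)
      fix t
      have B0: "B \<ge> 0" unfolding B_def using C_pos by (simp add: le_max_iff_disj)
      have "norm (f t * g ((1 / N t) *\<^sub>R \<gamma>)) = norm (f t) * norm (g ((1 / N t) *\<^sub>R \<gamma>))"
        by (simp add: norm_mult)
      also have "\<dots> \<le> norm (f t) * B" by (rule mult_left_mono[OF gB]) simp
      also have "\<dots> = norm (of_real B * f t)" using B0 by (simp add: norm_mult)
      finally show "norm (f t * g ((1 / N t) *\<^sub>R \<gamma>)) \<le> norm (of_real B * f t)" .
    qed
  qed
  have part2: "((\<lambda>j. K_op N g f (mat_zpow_app A j \<gamma>)) has_sum (LINT t|lborel. f t)) UNIV"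
    if g0: "\<gamma> \<noteq> 0" for \<gamma>
  proof -
    define F where "F = (\<lambda>t j. f t * g ((1 / N t) *\<^sub>R mat_zpow_app A j \<gamma>))"
    interpret P: pair_sigma_finite lborel "count_space (UNIV::int set)"
      by (simp add: pair_sigma_finite_def lborel.sigma_finite_measure_axioms sigma_finite_measure_count_space)
    have Fj: "(\<lambda>p. F (fst p) j) \<in> borel_measurable (lborel \<Otimes>\<^sub>M count_space UNIV)" for j
      unfolding F_def by measurable
    have Fm[measurable]: "case_prod F \<in> borel_measurable (lborel \<Otimes>\<^sub>M count_space UNIV)"
    proof -
      have "(\<lambda>p. F (fst p) (snd p)) \<in> borel_measurable (lborel \<Otimes>\<^sub>M count_space UNIV)"
        by (rule measurable_compose_countable'[where f="\<lambda>j p. F (fst p) j" and g=snd and I=UNIV])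
           (use Fj in auto)
      then show ?thesis by (simp add: case_prod_beta')
    qed
    have Fscale: "F t j = f t * g (mat_zpow_app A j ((1 / N t) *\<^sub>R \<gamma>))" for t j
      unfolding F_def by (simp add: mzp_scale)
    have sc0: "(1 / N t) *\<^sub>R \<gamma> \<noteq> 0" if "t \<noteq> 0" for t
      using Npos[OF that] g0 by simp
    have AE0: "AE t in lborel. t \<noteq> 0" by (rule AE_lborel_singleton)
    have inner_int: "integrable (count_space UNIV) (F t)" if "t \<noteq> 0" for t
      unfolding Fscale using g_count(1)[OF g_sum g_abs sc0[OF that]] by simp
    have inner_val: "integral\<^sup>L (count_space UNIV) (F t) = f t" if "t \<noteq> 0" for t
      unfolding Fscale using g_count(2)[OF g_sum g_abs sc0[OF that]] by simp
    have inner_norm: "integral\<^sup>L (count_space UNIV) (\<lambda>j. norm (F t j)) \<le> norm (f t) * C" if "t \<noteq> 0" for t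
    proof -
      have "integral\<^sup>L (count_space UNIV) (\<lambda>j. norm (F t j))
          = norm (f t) * integral\<^sup>L (count_space UNIV) (\<lambda>j. norm (g (mat_zpow_app A j ((1 / N t) *\<^sub>R \<gamma>))))"
        unfolding Fscale by (simp add: norm_mult)
      also have "\<dots> \<le> norm (f t) * C"
        using g_count(3)[OF g_sum g_abs sc0[OF that]] by (simp add: mult_left_mono)
      finally show ?thesis .
    qed
    have int_prod: "integrable (lborel \<Otimes>\<^sub>M count_space UNIV) (case_prod F)"
    proof (rule P.Fubini_integrable)
      show "integrable lborel (\<lambda>x. \<integral>y. norm (case_prod F (x, y)) \<partial>count_space UNIV)"
      proof (rule Bochner_Integration.integrable_bound[where f="\<lambda>t. C * norm (f t)"])
        show "integrable lborel (\<lambda>t. C * norm (f t))" using f_L1 by simp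
        show "(\<lambda>x. \<integral>y. norm (case_prod F (x, y)) \<partial>count_space UNIV) \<in> borel_measurable lborel"
        proof -
          have "(\<lambda>p. norm (case_prod F p)) \<in> borel_measurable (lborel \<Otimes>\<^sub>M count_space UNIV)"
            using measurable_compose[OF Fm borel_measurable_norm] by simp
          then have "case_prod (\<lambda>x y. norm (F x y)) \<in> borel_measurable (lborel \<Otimes>\<^sub>M count_space UNIV)"
            by (simp add: case_prod_beta')
          from P.M2.borel_measurable_lebesgue_integral[OF this] show ?thesis by simp
        qed
        show "AE x in lborel. norm (\<integral>y. norm (case_prod F (x, y)) \<partial>count_space UNIV) \<le> norm (C * norm (f x))"
          using AE0
        proof eventually_elim
          case (elim t)
          have "0 \<le> (\<integral>y. norm (F t y) \<partial>count_space UNIV)" by (rule integral_nonneg_AE) auto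
          then show ?case using inner_norm[OF elim] C_pos by (simp add: mult.commute)
        qed
      qed
      show "AE x in lborel. integrable (count_space UNIV) (\<lambda>y. case_prod F (x, y))"
        using AE0 by eventually_elim (simp add: inner_int)
    qed (rule Fm)
    have eq: "(\<integral>j. (\<integral>t. F t j \<partial>lborel) \<partial>count_space UNIV) = (\<integral>t. (\<integral>j. F t j \<partial>count_space UNIV) \<partial>lborel)"
      by (rule P.Fubini_integral[OF int_prod])
    also have "\<dots> = (\<integral>t. f t \<partial>lborel)"
      by (rule integral_cong_AE) (use AE0 inner_val in \<open>auto elim: AE_mp\<close>)
    finally have eq': "(\<integral>j. K_op N g f (mat_zpow_app A j \<gamma>) \<partial>count_space UNIV) = (\<integral>t. f t \<partial>lborel)"
      by (simp add: K_op_def F_def)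
    have "integrable (count_space UNIV) (\<lambda>j. \<integral>t. F t j \<partial>lborel)"
      by (rule P.integrable_snd[OF int_prod])
    then have "integrable (count_space UNIV) (\<lambda>j. K_op N g f (mat_zpow_app A j \<gamma>))"
      by (simp add: K_op_def F_def)
    from has_sum_count_space[OF this] show ?thesis unfolding eq' .
  qed
  have part4: "nonneg_c (K_op N g f \<gamma>)"
    if gn: "\<forall>x. nonneg_c (g x)" and fn: "AE t in lborel. nonneg_c (f t)" for \<gamma>
  proof -
    let ?h = "\<lambda>t. f t * g ((1 / N t) *\<^sub>R \<gamma>)"
    have hi: "integrable lborel ?h" by (rule part1)
    have AEh: "AE t in lborel. Im (?h t) = 0 \<and> Re (?h t) \<ge> 0"
      using fn
    proof eventually_elim
      case (elim t)
      then show ?case using gn unfolding nonneg_c_def by simp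
    qed
    have "Im (K_op N g f \<gamma>) = (\<integral>t. Im (?h t) \<partial>lborel)"
      unfolding K_op_def using integral_Im[OF hi] by simp
    also have "\<dots> = 0" by (rule integral_eq_zero_AE) (use AEh in \<open>auto elim: AE_mp\<close>)
    finally have 1: "Im (K_op N g f \<gamma>) = 0" .
    have "Re (K_op N g f \<gamma>) = (\<integral>t. Re (?h t) \<partial>lborel)"
      unfolding K_op_def using integral_Re[OF hi] by simp
    also have "\<dots> \<ge> 0" by (rule integral_nonneg_AE) (use AEh in \<open>auto elim: AE_mp\<close>)
    finally show ?thesis using 1 unfolding nonneg_c_def by simp
  qed
  show ?thesis using part1 part2 part4 by auto
qed

end
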